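(* Let $m\in\mathbb{N}$ and let $H_m$ be the graph described in the context, with the geodesic-biased random walk with target $b$ and excited set $\mathcal{X}=\{a,s_1,\dots,s_m\}$. Writing $T(v_1,b)$ for the expected first hitting time of $b$ by this walk started at $v_1$, we have \[T(v_1,b)\ \ge\ \frac{\exp(\sqrt{m}/10)}{m^{3/2}+1}.\]
   Context: Geodesic-biased random walk: let $G$ be a finite connected graph, $b\in V(G)$ a target vertex and $\mathcal{X}\subseteq V(G)$ a set of excited vertices. For every vertex $x\neq b$ fix in advance one shortest path in $G$ from $x$ to $b$. From an unexcited vertex the walker moves to a uniformly random neighbour; from an excited vertex she moves to the next vertex on the fixed shortest path to $b$. The graph $H_m$ ($m\in\mathbb{N}$) has vertex set $\{a,b\}\cup\{v_1,\dots,v_m\}\cup\{s_1,\dots,s_m\}\cup\{r_{i,j}: i\in[m],\ j\in[2m+1]\}$ (so $2+m(2m+3)$ vertices) and edges: the path $a,v_1,v_2,\dots,v_m,b$; the path $a,s_1,s_2,\dots,s_m$; and for each $i\in[m]$ the path $s_i,r_{i,1},r_{i,2},\dots,r_{i,2m+1},v_i$ (of length $2m+2$). Its maximum degree is $3$. In $H_m$ the unique shortest path from $s_i$ to $b$ goes $s_i,s_{i-1},\dots,s_1,a,v_1,\dots,v_m,b$, so with these excitations the walker moves deterministically from $s_i$ to $s_{i-1}$ (from $s_1$ to $a$) and from $a$ to $v_1$. *)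

theory Defs
  imports "HOL-Analysis.Analysis"
begin

definition nbrs :: "('a \<times> 'a) set \<Rightarrow> 'a \<Rightarrow> 'a set" where
  "nbrs E x = {y. (x, y) \<in> E}"

definition gdist :: "('a \<times> 'a) set \<Rightarrow> 'a \<Rightarrow> 'a \<Rightarrow> nat" where
  "gdist E x y = (LEAST n. (x, y) \<in> E ^^ n)"

text \<open>One-step transition probability.  X is the set of excited vertices, nxt x is
  the next vertex on the fixed shortest path from x to the target.\<close>
definition trans_prob :: "('a \<times> 'a) set \<Rightarrow> 'a set \<Rightarrow> ('a \<Rightarrow> 'a) \<Rightarrow> 'a \<Rightarrow> 'a \<Rightarrow> real" where
  "trans_prob E X nxt x y =
     (if x \<in> X then (if y = nxt x then 1 else 0)
      else (if y \<in> nbrs E x then 1 / real (card (nbrs E x)) else 0))"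

text \<open>not_hit E X nxt b n x = probability that the walk started at x has not
  visited b at any of the times 0,...,n, i.e. P_x(tau_b > n).\<close>
fun not_hit :: "('a \<times> 'a) set \<Rightarrow> 'a set \<Rightarrow> ('a \<Rightarrow> 'a) \<Rightarrow> 'a \<Rightarrow> nat \<Rightarrow> 'a \<Rightarrow> real" where
  "not_hit E X nxt b 0 x = (if x = b then 0 else 1)"
| "not_hit E X nxt b (Suc n) x =
     (if x = b then 0 else (\<Sum>y\<in>nbrs E x. trans_prob E X nxt x y * not_hit E X nxt b n y))"

text \<open>Expected hitting time E_x[tau_b] = sum over n of P_x(tau_b > n).\<close>
definition hit_time :: "('a \<times> 'a) set \<Rightarrow> 'a set \<Rightarrow> ('a \<Rightarrow> 'a) \<Rightarrow> 'a \<Rightarrow> 'a \<Rightarrow> ennreal" where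
  "hit_time E X nxt b x = (\<Sum>n. ennreal (not_hit E X nxt b n x))"

datatype hv = Va | Vb | Vv nat | Vs nat | Vr nat nat

definition H_base :: "nat \<Rightarrow> (hv \<times> hv) set" where
  "H_base m =
     {(Va, Vv 1)} \<union> {(Vv i, Vv (i + 1)) | i. 1 \<le> i \<and> i < m} \<union> {(Vv m, Vb)}
   \<union> {(Va, Vs 1)} \<union> {(Vs i, Vs (i + 1)) | i. 1 \<le> i \<and> i < m}
   \<union> {(Vs i, Vr i 1) | i. 1 \<le> i \<and> i \<le> m}
   \<union> {(Vr i j, Vr i (j + 1)) | i j. 1 \<le> i \<and> i \<le> m \<and> 1 \<le> j \<and> j \<le> 2 * m}
   \<union> {(Vr i (2 * m + 1), Vv i) | i. 1 \<le> i \<and> i \<le> m}"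

definition H_edges :: "nat \<Rightarrow> (hv \<times> hv) set" where
  "H_edges m = H_base m \<union> (H_base m)\<inverse>"

definition H_exc :: "nat \<Rightarrow> hv set" where
  "H_exc m = {Va} \<union> {Vs i | i. 1 \<le> i \<and> i \<le> m}"

end

theory Submission
  imports Defs
begin


lemma trans_prob_nonneg: "trans_prob E X nxt x y \<ge> 0"
  unfolding trans_prob_def by auto

lemma not_hit_nonneg: "not_hit E X nxt b n x \<ge> 0"
proof (induction n arbitrary: x)
  case 0 then show ?case by simp
next
  case (Suc n) then show ?case
    by (simp add: sum_nonneg trans_prob_nonneg)
qed

lemma not_hit_b: "not_hit E X nxt b n b = 0"
  by (cases n) auto

lemma potential_step:
  fixes f :: "'a \<Rightarrow> real"
  assumes fM: "\<And>x. f x \<le> M" and fb: "f b \<le> 0"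
    and sup: "\<And>x. x \<noteq> b \<Longrightarrow> f x \<le> 1 + (\<Sum>y\<in>nbrs E x. trans_prob E X nxt x y * f y)"
  shows "f x \<le> (\<Sum>k<n. not_hit E X nxt b k x) + M * not_hit E X nxt b n x"
proof (induction n arbitrary: x)
  case 0
  show ?case using fM[of x] fb by (cases "x = b") auto
next
  case (Suc n)
  show ?case
  proof (cases "x = b")
    case True
    then show ?thesis using fb by (simp add: not_hit_b)
  next
    case False
    let ?P = "trans_prob E X nxt x"
    have "(\<Sum>k<Suc n. not_hit E X nxt b k x) = 1 + (\<Sum>k<n. not_hit E X nxt b (Suc k) x)"
      by (simp only: sum.lessThan_Suc_shift) (simp add: False)
    also have "(\<Sum>k<n. not_hit E X nxt b (Suc k) x)
        = (\<Sum>y\<in>nbrs E x. ?P y * (\<Sum>k<n. not_hit E X nxt b k y))"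
    proof -
      have "(\<Sum>k<n. not_hit E X nxt b (Suc k) x) = (\<Sum>k<n. \<Sum>y\<in>nbrs E x. ?P y * not_hit E X nxt b k y)"
        using False by simp
      also have "\<dots> = (\<Sum>y\<in>nbrs E x. \<Sum>k<n. ?P y * not_hit E X nxt b k y)"
        by (rule sum.swap)
      also have "\<dots> = (\<Sum>y\<in>nbrs E x. ?P y * (\<Sum>k<n. not_hit E X nxt b k y))"
        by (simp only: sum_distrib_left)
      finally show ?thesis .
    qed
    finally have S: "(\<Sum>k<Suc n. not_hit E X nxt b k x) = 1 + (\<Sum>y\<in>nbrs E x. ?P y * (\<Sum>k<n. not_hit E X nxt b k y))" .
    have N: "M * not_hit E X nxt b (Suc n) x = (\<Sum>y\<in>nbrs E x. ?P y * (M * not_hit E X nxt b n y))"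
      using False by (simp add: sum_distrib_left mult.left_commute)
    have "f x \<le> 1 + (\<Sum>y\<in>nbrs E x. ?P y * f y)" by (rule sup[OF False])
    also have "\<dots> \<le> 1 + (\<Sum>y\<in>nbrs E x. ?P y * ((\<Sum>k<n. not_hit E X nxt b k y) + M * not_hit E X nxt b n y))"
      apply (rule add_left_mono)
      apply (rule sum_mono)
      apply (rule mult_left_mono[OF Suc.IH trans_prob_nonneg])
      done
    also have "\<dots> = (\<Sum>k<Suc n. not_hit E X nxt b k x) + M * not_hit E X nxt b (Suc n) x"
      unfolding S N by (simp only: sum.distrib distrib_left add.assoc)
    finally show ?thesis .
  qed
qed

lemma potential_bound:
  fixes f :: "'a \<Rightarrow> real"
  assumes fM: "\<And>x. f x \<le> M" and fb: "f b \<le> 0"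
    and sup: "\<And>x. x \<noteq> b \<Longrightarrow> f x \<le> 1 + (\<Sum>y\<in>nbrs E x. trans_prob E X nxt x y * f y)"
  shows "ennreal (f x) \<le> hit_time E X nxt b x"
proof (cases "hit_time E X nxt b x = top")
  case True then show ?thesis by simp
next
  case False
  let ?a = "\<lambda>n. not_hit E X nxt b n x"
  have nn: "\<And>n. 0 \<le> ?a n" by (rule not_hit_nonneg)
  have ntop: "(\<Sum>n. ennreal (?a n)) \<noteq> top"
    using False unfolding hit_time_def .
  have sm: "summable ?a"
    by (rule summable_suminf_not_top[OF nn ntop])
  have eq: "hit_time E X nxt b x = ennreal (suminf ?a)"
    unfolding hit_time_def by (rule suminf_ennreal2[OF nn sm])
  have l1: "(\<lambda>n. (\<Sum>k<n. ?a k)) \<longlonglongrightarrow> suminf ?a"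
    by (rule summable_LIMSEQ[OF sm])
  have l2: "(\<lambda>n. M * ?a n) \<longlonglongrightarrow> M * 0"
    by (rule tendsto_mult[OF tendsto_const summable_LIMSEQ_zero[OF sm]])
  have lim: "(\<lambda>n. (\<Sum>k<n. ?a k) + M * ?a n) \<longlonglongrightarrow> suminf ?a + M * 0"
    by (rule tendsto_add[OF l1 l2])
  have "f x \<le> suminf ?a + M * 0"
    by (rule LIMSEQ_le_const[OF lim]) (use potential_step[OF fM fb sup, of x] in blast)
  then show ?thesis unfolding eq by (simp add: ennreal_leI)
qed




lemma mem_E: "(x, y) \<in> H_edges m \<longleftrightarrow> (x, y) \<in> H_base m \<or> (y, x) \<in> H_base m"
  unfolding H_edges_def by auto

lemma nb_Va: "m \<ge> 1 \<Longrightarrow> nbrs (H_edges m) Va = {Vv 1, Vs 1}"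
  unfolding nbrs_def H_edges_def H_base_def by auto

lemma nb_Vv: "1 \<le> i \<Longrightarrow> i \<le> m \<Longrightarrow> nbrs (H_edges m) (Vv i) =
   {if i = 1 then Va else Vv (i - 1), if i = m then Vb else Vv (i + 1), Vr i (2*m+1)}"
  unfolding nbrs_def H_edges_def H_base_def by auto

lemma nb_Vs: "1 \<le> i \<Longrightarrow> i \<le> m \<Longrightarrow> nbrs (H_edges m) (Vs i) =
   {if i = 1 then Va else Vs (i - 1), Vr i 1} \<union> (if i < m then {Vs (i+1)} else {})"
  unfolding nbrs_def H_edges_def H_base_def by auto

lemma nb_Vr: "1 \<le> i \<Longrightarrow> i \<le> m \<Longrightarrow> 1 \<le> j \<Longrightarrow> j \<le> 2*m+1 \<Longrightarrow> nbrs (H_edges m) (Vr i j) =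
   {if j = 1 then Vs i else Vr i (j - 1), if j = 2*m+1 then Vv i else Vr i (j + 1)}"
  unfolding nbrs_def H_edges_def H_base_def by auto



fun dd :: "nat \<Rightarrow> hv \<Rightarrow> int" where
  "dd m Va = int m + 1"
| "dd m Vb = 0"
| "dd m (Vv i) = int m + 1 - int i"
| "dd m (Vs i) = int m + 1 + int i"
| "dd m (Vr i j) = min (int m + 1 + int i + int j) (3 * int m + 3 - int i - int j)"

lemma base_cases:
  assumes "(x, y) \<in> H_base m"
  shows "(x = Va \<and> y = Vv 1) \<or> (\<exists>i. 1 \<le> i \<and> i < m \<and> x = Vv i \<and> y = Vv (i+1))
   \<or> (x = Vv m \<and> y = Vb) \<or> (x = Va \<and> y = Vs 1)
   \<or> (\<exists>i. 1 \<le> i \<and> i < m \<and> x = Vs i \<and> y = Vs (i+1))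
   \<or> (\<exists>i. 1 \<le> i \<and> i \<le> m \<and> x = Vs i \<and> y = Vr i 1)
   \<or> (\<exists>i j. 1 \<le> i \<and> i \<le> m \<and> 1 \<le> j \<and> j \<le> 2*m \<and> x = Vr i j \<and> y = Vr i (j+1))
   \<or> (\<exists>i. 1 \<le> i \<and> i \<le> m \<and> x = Vr i (2*m+1) \<and> y = Vv i)"
  using assms unfolding H_base_def by blast

lemma dd_lip_base: "(x, y) \<in> H_base m \<Longrightarrow> \<bar>dd m x - dd m y\<bar> \<le> 1"
proof -
  assume "(x, y) \<in> H_base m"
  note c = base_cases[OF this]
  have L1: "\<bar>dd m (Vv i) - dd m (Vv (i+1))\<bar> \<le> 1" for i by simp
  have L2: "i \<le> m \<Longrightarrow> \<bar>dd m (Vs i) - dd m (Vr i 1)\<bar> \<le> 1" for i by (simp add: min_def)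
  have L3: "\<bar>dd m (Vr i j) - dd m (Vr i (j+1))\<bar> \<le> 1" for i j by (simp add: min_def)
  have L4: "\<bar>dd m (Vr i (2*m+1)) - dd m (Vv i)\<bar> \<le> 1" for i by (simp add: min_def)
  have L5: "\<bar>dd m (Vs i) - dd m (Vs (i+1))\<bar> \<le> 1" for i by simp
  from c show ?thesis
    apply (elim disjE exE conjE)
    apply (simp_all add: min_def)
    done
qed

lemma dd_lip: "(x, y) \<in> H_edges m \<Longrightarrow> dd m x \<le> dd m y + 1"
  unfolding H_edges_def using dd_lip_base[of x y m] dd_lip_base[of y x m] by auto

lemma dd_path: "(x, y) \<in> H_edges m ^^ n \<Longrightarrow> dd m x \<le> int n + dd m y"
proof (induction n arbitrary: x)
  case 0 then have "x = y" by simp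
  then show ?case by simp
next
  case (Suc n)
  from Suc.prems obtain z where z1: "(x, z) \<in> H_edges m" and z2: "(z, y) \<in> H_edges m ^^ n"
    using relpow_Suc_D2[OF Suc.prems] by blast
  have "dd m x \<le> dd m z + 1" by (rule dd_lip[OF z1])
  moreover have "dd m z \<le> int n + dd m y" by (rule Suc.IH[OF z2])
  ultimately show ?case by simp
qed


lemma E_sym: "(x, y) \<in> H_edges m \<Longrightarrow> (y, x) \<in> H_edges m"
  unfolding H_edges_def by auto

lemma E_vv: "1 \<le> i \<Longrightarrow> i < m \<Longrightarrow> (Vv i, Vv (i+1)) \<in> H_edges m"
  unfolding H_edges_def H_base_def by auto
lemma E_vb: "(Vv m, Vb) \<in> H_edges m"
  unfolding H_edges_def H_base_def by auto
lemma E_av: "(Va, Vv 1) \<in> H_edges m"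
  unfolding H_edges_def H_base_def by auto
lemma E_sa: "(Vs 1, Va) \<in> H_edges m"
  unfolding H_edges_def H_base_def by auto
lemma E_ss: "1 \<le> i \<Longrightarrow> i < m \<Longrightarrow> (Vs (i+1), Vs i) \<in> H_edges m"
  unfolding H_edges_def H_base_def by auto

lemma path_Vv_aux: "\<forall>i. m - i = k \<longrightarrow> 1 \<le> i \<longrightarrow> i \<le> m \<longrightarrow> (Vv i, Vb) \<in> H_edges m ^^ Suc k"
proof (induction k)
  case 0
  show ?case
  proof (intro allI impI)
    fix i assume "m - i = 0" "1 \<le> i" "i \<le> m"
    then have "i = m" by simp
    then show "(Vv i, Vb) \<in> H_edges m ^^ Suc 0"
      using E_vb[of m] by simp
  qed
next
  case (Suc k)
  show ?case
  proof (intro allI impI)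
    fix i assume a: "m - i = Suc k" "1 \<le> i" "i \<le> m"
    then have "i < m" "m - (i+1) = k" by auto
    then have "(Vv (i+1), Vb) \<in> H_edges m ^^ Suc k" using Suc.IH by simp
    moreover have "(Vv i, Vv (i+1)) \<in> H_edges m" using E_vv a \<open>i < m\<close> by simp
    ultimately show "(Vv i, Vb) \<in> H_edges m ^^ Suc (Suc k)"
      by (rule relpow_Suc_I2[rotated])
  qed
qed

lemma path_Vv: "1 \<le> i \<Longrightarrow> i \<le> m \<Longrightarrow> (Vv i, Vb) \<in> H_edges m ^^ (m + 1 - i)"
  using path_Vv_aux[of m "m - i"] by (simp add: Suc_diff_le)

lemma path_Va: "1 \<le> m \<Longrightarrow> (Va, Vb) \<in> H_edges m ^^ (m + 1)"
proof -
  assume "1 \<le> m"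
  then have "(Vv 1, Vb) \<in> H_edges m ^^ m" using path_Vv[of 1 m] by simp
  then show ?thesis using relpow_Suc_I2[OF E_av] by simp
qed

lemma path_Vs: "1 \<le> m \<Longrightarrow> 1 \<le> i \<Longrightarrow> i \<le> m \<Longrightarrow> (Vs i, Vb) \<in> H_edges m ^^ (m + 1 + i)"
proof (induction i)
  case 0 then show ?case by simp
next
  case (Suc i)
  show ?case
  proof (cases "i = 0")
    case True
    then show ?thesis using relpow_Suc_I2[OF E_sa path_Va[OF Suc.prems(1)]] by simp
  next
    case False
    then have "(Vs i, Vb) \<in> H_edges m ^^ (m + 1 + i)" using Suc by simp
    moreover have "(Vs (i+1), Vs i) \<in> H_edges m" using E_ss[of i m] False Suc.prems by simp
    ultimately have "(Vs (i+1), Vb) \<in> H_edges m ^^ Suc (m + 1 + i)"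
      by (intro relpow_Suc_I2)
    then show ?thesis by simp
  qed
qed

lemma gdist_le: "(x, y) \<in> E ^^ n \<Longrightarrow> gdist E x y \<le> n"
  unfolding gdist_def by (rule Least_le)

lemma gdist_path: "(x, y) \<in> E ^^ n \<Longrightarrow> (x, y) \<in> E ^^ (gdist E x y)"
  unfolding gdist_def by (rule LeastI)

lemma dd_le_gdist: "(x, Vb) \<in> H_edges m ^^ n \<Longrightarrow> dd m x \<le> int (gdist (H_edges m) x Vb)"
  using dd_path[OF gdist_path] by fastforce

lemma nxt_dd:
  assumes A: "y \<in> nbrs (H_edges m) x" "gdist (H_edges m) y Vb + 1 = gdist (H_edges m) x Vb"
    and P: "(x, Vb) \<in> H_edges m ^^ k"
  shows "dd m y + 1 \<le> int k"
proof -
  have "(y, x) \<in> H_edges m" using A(1) E_sym unfolding nbrs_def by blast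
  then have "(y, Vb) \<in> H_edges m ^^ Suc k" by (rule relpow_Suc_I2[OF _ P])
  then have "dd m y \<le> int (gdist (H_edges m) y Vb)" by (rule dd_le_gdist)
  moreover have "gdist (H_edges m) x Vb \<le> k" by (rule gdist_le[OF P])
  ultimately show ?thesis using A(2) by linarith
qed

lemma nxt_Va:
  assumes "1 \<le> m" "nxt Va \<in> nbrs (H_edges m) Va"
    "gdist (H_edges m) (nxt Va) Vb + 1 = gdist (H_edges m) Va Vb"
  shows "nxt Va = Vv 1"
proof -
  have "dd m (nxt Va) + 1 \<le> int (m+1)" by (rule nxt_dd[OF assms(2,3) path_Va[OF assms(1)]])
  moreover have "nxt Va \<in> {Vv 1, Vs 1}" using assms nb_Va by auto
  ultimately show ?thesis by auto
qed

lemma nxt_Vs: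
  assumes "1 \<le> m" "1 \<le> i" "i \<le> m" "nxt (Vs i) \<in> nbrs (H_edges m) (Vs i)"
    "gdist (H_edges m) (nxt (Vs i)) Vb + 1 = gdist (H_edges m) (Vs i) Vb"
  shows "nxt (Vs i) = (if i = 1 then Va else Vs (i - 1))"
proof -
  have bd: "dd m (nxt (Vs i)) + 1 \<le> int (m+1+i)" by (rule nxt_dd[OF assms(4,5) path_Vs[OF assms(1-3)]])
  have "nxt (Vs i) \<in> {if i = 1 then Va else Vs (i - 1), Vr i 1} \<union> (if i < m then {Vs (i+1)} else {})"
    using assms(4) nb_Vs[OF assms(2,3)] by simp
  then have mem: "nxt (Vs i) = (if i = 1 then Va else Vs (i - 1)) \<or> nxt (Vs i) = Vr i 1 \<or> nxt (Vs i) = Vs (i+1)"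
    by (cases "i < m") auto
  have n1: "nxt (Vs i) \<noteq> Vr i 1"
  proof
    assume e: "nxt (Vs i) = Vr i 1"
    have "dd m (Vr i 1) = int m + 2 + int i" using assms(3) by (simp add: min_def)
    then show False using bd e by simp
  qed
  have n2: "nxt (Vs i) \<noteq> Vs (i+1)"
  proof
    assume e: "nxt (Vs i) = Vs (i+1)"
    then show False using bd by simp
  qed
  show ?thesis using mem n1 n2 by blast
qed



definition tt :: "nat \<Rightarrow> real" where "tt m = 1 / sqrt (2 * real m + 2)"
definition qq :: "nat \<Rightarrow> real" where "qq m = 1 + tt m"

definition Gf :: "nat \<Rightarrow> nat \<Rightarrow> nat \<Rightarrow> real" where
  "Gf m i j = qq m + real j * (tt m)^2 * (qq m ^ i - qq m)"

fun gg :: "nat \<Rightarrow> hv \<Rightarrow> real" where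
  "gg m Va = qq m"
| "gg m Vb = qq m ^ (m+1)"
| "gg m (Vv i) = qq m ^ i"
| "gg m (Vs i) = qq m"
| "gg m (Vr i j) = Gf m i j"

lemma tt_pos: "tt m > 0" unfolding tt_def by simp

lemma tt_sq: "(2 * real m + 2) * (tt m)^2 = 1"
  unfolding tt_def by (simp add: power_divide)

lemma tt_le: "m \<ge> 1 \<Longrightarrow> tt m \<le> 1/2"
proof -
  assume "m \<ge> 1"
  then have "2 \<le> sqrt (2 * real m + 2)"
    by (simp add: real_le_rsqrt)
  then show ?thesis unfolding tt_def by (simp add: divide_simps)
qed

lemma Gf0: "Gf m i 0 = qq m" unfolding Gf_def by simp

lemma Gf_end: "Gf m i (2*m+2) = qq m ^ i"
proof -
  have "real (2*m+2) * (tt m)^2 = 1" using tt_sq[of m] by (simp add: add.commute)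
  then show ?thesis unfolding Gf_def by (simp add: algebra_simps)
qed

lemma Gf_mid: "j \<ge> 1 \<Longrightarrow> Gf m i j = (Gf m i (j - 1) + Gf m i (j + 1)) / 2"
  unfolding Gf_def by (simp add: of_nat_diff algebra_simps)

lemma key_ineq:
  fixes p t :: real
  assumes "p \<ge> 1" "0 < t" "t \<le> 1" and h: "c * t^2 = 1 - t^2"
  shows "(p + p * (1+t)^2 + (1 + t) + c * t^2 * (p * (1+t) - (1+t))) / 3 - p * (1+t) \<le> (1+t) * t / 3"
proof -
  have e: "p + p * (1+t)^2 + (1 + t) + c * t^2 * (p * (1+t) - (1+t)) - 3 * (p * (1+t))
        = t^2 + t^3 - p * t^3"
    unfolding h by (simp add: algebra_simps power2_eq_square power3_eq_cube)
  have "t^3 \<le> p * t^3" using assms by simp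
  moreover have "t^2 \<le> t^2" by simp
  ultimately have "t^2 + t^3 - p * t^3 \<le> t + t^2" using assms by linarith
  moreover have "(1+t)*t = t + t^2" by (simp add: algebra_simps power2_eq_square)
  ultimately have le: "p + p * (1+t)^2 + (1 + t) + c * t^2 * (p * (1+t) - (1+t)) - 3 * (p * (1+t)) \<le> (1+t)*t"
    using e by linarith
  define X where "X = p + p * (1+t)^2 + (1 + t) + c * t^2 * (p * (1+t) - (1+t))"
  have "X / 3 - p * (1+t) = (X - 3 * (p * (1+t))) / 3" by (simp add: field_simps)
  also have "\<dots> \<le> (1+t)*t/3" using le unfolding X_def by (intro divide_right_mono) auto
  finally show ?thesis unfolding X_def .
qed


lemma qq_pos: "qq m > 0" unfolding qq_def using tt_pos[of m] by simp
lemma qq_ge1: "qq m \<ge> 1" unfolding qq_def using tt_pos[of m] by simp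

lemma final_bound:
  assumes m: "1 \<le> m"
  shows "exp (sqrt (real m) / 10) / (real m powr (3/2) + 1)
     \<le> 3 / (qq m * tt m) * (qq m ^ (m+1) - qq m)"
proof -
  define t where "t = tt m"
  define q where "q = qq m"
  have t0: "0 < t" unfolding t_def by (rule tt_pos)
  have t1: "t \<le> 1/2" unfolding t_def by (rule tt_le[OF m])
  have qt: "q = 1 + t" unfolding q_def t_def qq_def ..
  have q1: "1 \<le> q" unfolding q_def by (rule qq_ge1)
  define p where "p = q ^ (m - 1)"
  have p1: "1 \<le> p" unfolding p_def using q1 by (rule one_le_power)
  have qm: "q ^ m = p * q" unfolding p_def using m
    by (metis Suc_diff_le diff_Suc_1 power_Suc2)
  have e1: "3 / (q * t) * (q ^ (m+1) - q) = 3 * (p * q - 1) / t"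
  proof -
    have "q ^ (m+1) - q = q * (p * q - 1)" using qm by (simp add: algebra_simps)
    then show ?thesis using t0 q1 by (simp add: field_simps)
  qed
  have "p * q - 1 \<ge> p * t" using p1 qt by (simp add: algebra_simps)
  then have e2: "3 * p \<le> 3 * (p * q - 1) / t" using t0 by (simp add: field_simps)
  have lnq: "t / 2 \<le> ln q"
  proof -
    have "t - t^2 \<le> ln (1 + t)" using t0 t1 by (intro ln_one_plus_pos_lower_bound) auto
    moreover have "t / 2 \<le> t - t^2"
    proof -
      have "t * t \<le> t * (1/2)" using t0 t1 by (intro mult_left_mono) auto
      then show ?thesis by (simp add: power2_eq_square)
    qed
    ultimately show ?thesis using qt by simp
  qed
  have "exp (t/2) \<le> q" using lnq q1 by (metis exp_le_cancel_iff exp_ln less_le_trans zero_less_one)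
  then have pe: "exp (real (m - 1) * (t/2)) \<le> p" unfolding p_def exp_of_nat_mult
    by (intro power_mono) auto
  define r where "r = sqrt (real m)"
  have r1: "1 \<le> r" unfolding r_def using m by simp
  have rr: "r * r = real m" unfolding r_def by simp
  have s2: "sqrt (2 * real m + 2) \<le> 2 * r"
  proof -
    have "sqrt (2 * real m + 2) \<le> sqrt (4 * real m)" using m by (intro real_sqrt_le_mono) simp
    also have "\<dots> = 2 * r" unfolding r_def by (simp add: real_sqrt_mult)
    finally show ?thesis .
  qed
  have tr: "1 / (2 * r) \<le> t" unfolding t_def tt_def using s2 r1
    by (intro divide_left_mono) auto
  have m1: "real (m - 1) = r * r - 1" using m rr by (simp add: of_nat_diff)
  have "real (m - 1) * (1 / (2*r)) \<le> real (m - 1) * t" using tr by (intro mult_left_mono) auto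
  then have A: "(r * r - 1) / (4 * r) \<le> real (m - 1) * (t/2)" using m1 r1 by (simp add: field_simps)
  have B: "r / 10 \<le> 1 + (r * r - 1) / (4 * r)"
  proof -
    have a: "(r*r-1)/(4*r) = r/4 - 1/(4*r)" using r1 by (simp add: field_simps)
    have b: "1/(4*r) \<le> 1/4" using r1 by (simp add: field_simps)
    show ?thesis unfolding a using b r1 by linarith
  qed
  have AB: "r / 10 \<le> 1 + real (m - 1) * (t/2)" using A B by linarith
  have "exp (r / 10) \<le> exp 1 * exp (real (m - 1) * (t/2))"
    unfolding exp_add[symmetric] using AB by (simp only: exp_le_cancel_iff)
  also have "\<dots> \<le> 3 * p" using pe exp_le by (intro mult_mono) auto
  finally have C: "exp (r / 10) \<le> 3 * p" .
  have D: "exp (r / 10) / (real m powr (3/2) + 1) \<le> exp (r / 10)"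
  proof -
    have d1: "1 \<le> real m powr (3/2) + 1" by simp
    have d0: "0 < real m powr (3/2) + 1" using d1 by linarith
    have "exp (r / 10) / (real m powr (3/2) + 1) \<le> exp (r / 10) / 1"
      by (rule divide_left_mono[OF d1], simp, use d0 in simp)
    then show ?thesis by simp
  qed
  show ?thesis using C D e1 e2 unfolding r_def q_def t_def by linarith
qed

fun valid :: "nat \<Rightarrow> hv \<Rightarrow> bool" where
  "valid m Va = True"
| "valid m Vb = True"
| "valid m (Vv i) = (1 \<le> i \<and> i \<le> m)"
| "valid m (Vs i) = (1 \<le> i \<and> i \<le> m)"
| "valid m (Vr i j) = (1 \<le> i \<and> i \<le> m \<and> 1 \<le> j \<and> j \<le> 2*m+1)"

lemma nb_invalid: "1 \<le> m \<Longrightarrow> \<not> valid m x \<Longrightarrow> nbrs (H_edges m) x = {}"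
  by (cases x) (auto simp: nbrs_def H_edges_def H_base_def)

definition CC :: "nat \<Rightarrow> real" where "CC m = 3 / (qq m * tt m)"

definition ff :: "nat \<Rightarrow> hv \<Rightarrow> real" where
  "ff m x = (if valid m x then CC m * (qq m ^ (m+1) - gg m x) else 0)"

lemma CC_pos: "CC m > 0" unfolding CC_def using qq_pos tt_pos by simp

lemma exc_Va: "Va \<in> H_exc m" unfolding H_exc_def by simp
lemma exc_Vs: "1 \<le> i \<Longrightarrow> i \<le> m \<Longrightarrow> Vs i \<in> H_exc m" unfolding H_exc_def by simp
lemma nexc_Vv: "Vv i \<notin> H_exc m" unfolding H_exc_def by simp
lemma nexc_Vr: "Vr i j \<notin> H_exc m" unfolding H_exc_def by simp

lemma sum_exc:
  assumes "x \<in> X" "finite (nbrs E x)" "nxt x \<in> nbrs E x"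
  shows "(\<Sum>y\<in>nbrs E x. trans_prob E X nxt x y * h y) = h (nxt x)"
proof -
  have "(\<Sum>y\<in>nbrs E x. trans_prob E X nxt x y * h y) = (\<Sum>y\<in>nbrs E x. if y = nxt x then h y else 0)"
    by (rule sum.cong) (auto simp: trans_prob_def assms(1))
  also have "\<dots> = h (nxt x)" using assms(2,3) by (simp add: sum.delta)
  finally show ?thesis .
qed

lemma sum_unexc:
  assumes "x \<notin> X"
  shows "(\<Sum>y\<in>nbrs E x. trans_prob E X nxt x y * h y) = (\<Sum>y\<in>nbrs E x. h y) / real (card (nbrs E x))"
proof -
  have "(\<Sum>y\<in>nbrs E x. trans_prob E X nxt x y * h y) = (\<Sum>y\<in>nbrs E x. h y / real (card (nbrs E x)))"
    by (rule sum.cong) (auto simp: trans_prob_def assms(1))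
  also have "\<dots> = (\<Sum>y\<in>nbrs E x. h y) / real (card (nbrs E x))" by (simp add: sum_divide_distrib)
  finally show ?thesis .
qed

lemma avg3:
  fixes C Q a b c g :: real
  assumes "C * ((a + b + c) / 3 - g) \<le> 1"
  shows "C * (Q - g) \<le> 1 + (C * (Q - a) + C * (Q - b) + C * (Q - c)) / 3"
proof -
  have "1 + (C * (Q - a) + C * (Q - b) + C * (Q - c)) / 3 - C * (Q - g) = 1 - C * ((a + b + c) / 3 - g)"
    by (simp add: algebra_simps add_divide_distrib diff_divide_distrib)
  then show ?thesis using assms by linarith
qed

lemma avg2:
  fixes C Q a b g :: real
  assumes "g = (a + b) / 2"
  shows "C * (Q - g) \<le> 1 + (C * (Q - a) + C * (Q - b)) / 2"
proof -
  have "1 + (C * (Q - a) + C * (Q - b)) / 2 - C * (Q - g) = 1"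
    unfolding assms by (simp add: algebra_simps add_divide_distrib diff_divide_distrib)
  then show ?thesis by linarith
qed

lemma gg_nonneg: "valid m x \<Longrightarrow> gg m x \<ge> 0"
proof (cases x)
  case (Vr i j)
  assume v: "valid m x"
  then have "1 \<le> i" using Vr by simp
  then have "qq m ^ 1 \<le> qq m ^ i" using qq_ge1 by (intro power_increasing) auto
  then have "qq m ^ i - qq m \<ge> 0" by simp
  then have "Gf m i j \<ge> qq m" unfolding Gf_def by simp
  then show ?thesis using Vr qq_pos[of m] by simp
qed (use qq_pos[of m] in auto)

lemma vv_ineq:
  assumes m: "1 \<le> m" and i: "1 \<le> i" "i \<le> m"
  shows "CC m * (((if i = 1 then qq m else qq m ^ (i - 1)) + qq m ^ (i+1) + Gf m i (2*m+1)) / 3 - qq m ^ i) \<le> 1"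
proof -
  define q where "q = qq m"
  define t where "t = tt m"
  have qt: "q = 1 + t" unfolding q_def t_def qq_def ..
  have t0: "0 < t" unfolding t_def by (rule tt_pos)
  have t1: "t \<le> 1" using tt_le[OF m] unfolding t_def by simp
  have C: "CC m = 3 / (q * t)" unfolding CC_def q_def t_def ..
  have gi: "((if i = 1 then q else q ^ (i - 1)) + q ^ (i+1) + Gf m i (2*m+1)) / 3 - q ^ i \<le> q * t / 3"
  proof (cases "i = 1")
    case True
    have "Gf m i (2*m+1) = q" unfolding Gf_def q_def using True by simp
    then show ?thesis using True qt by (simp add: algebra_simps power2_eq_square)
  next
    case False
    define p where "p = q ^ (i - 1)"
    have p1: "1 \<le> p" unfolding p_def using qt t0 by (intro one_le_power) simp
    have e1: "q ^ i = p * (1 + t)" unfolding p_def qt[symmetric] using i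
      by (metis Suc_diff_le diff_Suc_1 power_Suc2)
    have e2: "q ^ (i+1) = p * (1 + t)^2" using e1 qt by (simp add: power2_eq_square)
    have cc: "real (2*m+1) * t^2 = 1 - t^2" using tt_sq[of m] unfolding t_def by (simp add: algebra_simps)
    have e3: "Gf m i (2*m+1) = (1+t) + real (2*m+1) * t^2 * (p * (1+t) - (1+t))"
      unfolding Gf_def q_def[symmetric] t_def[symmetric] using e1 qt by simp
    have K: "(p + p * (1+t)^2 + (1 + t) + real (2*m+1) * t^2 * (p * (1+t) - (1+t))) / 3 - p * (1+t) \<le> (1+t) * t / 3"
      by (rule key_ineq[OF p1 t0 t1 cc])
    have Aeq: "(if i = 1 then q else q ^ (i - 1)) = p" using False unfolding p_def by simp
    have G: "((if i = 1 then q else q ^ (i - 1)) + q ^ (i+1) + Gf m i (2*m+1)) / 3 - q ^ i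
       = (p + p * (1+t)^2 + (1 + t) + real (2*m+1) * t^2 * (p * (1+t) - (1+t))) / 3 - p * (1+t)"
      by (simp only: Aeq e2 e3 e1 add.assoc)
    have Q3: "q * t / 3 = (1+t) * t / 3" by (simp only: qt)
    show ?thesis unfolding G Q3 by (rule K)
  qed
  have "CC m * (((if i = 1 then q else q ^ (i - 1)) + q ^ (i+1) + Gf m i (2*m+1)) / 3 - q ^ i) \<le> CC m * (q * t / 3)"
    using gi CC_pos[of m] by (intro mult_left_mono) auto
  also have "CC m * (q * t / 3) = 1"
  proof -
    have q0: "q \<noteq> 0" using t0 qt by simp
    have t00: "t \<noteq> 0" using t0 by simp
    show ?thesis unfolding C using q0 t00 by (simp add: field_simps)
  qed
  finally show ?thesis unfolding q_def .
qed

lemma cond: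
  assumes m1: "1 \<le> m" and nA: "nxt Va = Vv 1"
    and nS: "\<And>i. 1 \<le> i \<Longrightarrow> i \<le> m \<Longrightarrow> nxt (Vs i) = (if i = 1 then Va else Vs (i - 1))"
    and xb: "x \<noteq> Vb"
  shows "ff m x \<le> 1 + (\<Sum>y\<in>nbrs (H_edges m) x. trans_prob (H_edges m) (H_exc m) nxt x y * ff m y)"
proof (cases "valid m x")
  case False
  then show ?thesis by (simp add: nb_invalid[OF m1] ff_def)
next
  case True
  let ?E = "H_edges m" and ?X = "H_exc m" and ?C = "CC m" and ?Q = "qq m ^ (m+1)"
  show ?thesis
  proof (cases x)
    case Va
    have "(\<Sum>y\<in>nbrs ?E x. trans_prob ?E ?X nxt x y * ff m y) = ff m (nxt x)"
      using Va nA nb_Va[OF m1] exc_Va by (intro sum_exc) auto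
    then show ?thesis using Va nA m1 by (simp add: ff_def)
  next
    case Vb then show ?thesis using xb by simp
  next
    case (Vs i)
    have i: "1 \<le> i" "i \<le> m" using True Vs by auto
    have "(\<Sum>y\<in>nbrs ?E x. trans_prob ?E ?X nxt x y * ff m y) = ff m (nxt x)"
      using Vs nS[OF i] nb_Vs[OF i] exc_Vs[OF i] by (intro sum_exc) auto
    moreover have "ff m (nxt x) = ff m x" using Vs nS[OF i] i by (auto simp: ff_def)
    ultimately show ?thesis by simp
  next
    case (Vv i)
    have i: "1 \<le> i" "i \<le> m" using True Vv by auto
    define A where "A = (if i = 1 then Va else Vv (i - 1))"
    define B where "B = (if i = m then Vb else Vv (i + 1))"
    define R where "R = Vr i (2*m+1)"
    have N: "nbrs ?E x = {A, B, R}" using nb_Vv[OF i] Vv unfolding A_def B_def R_def by simp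
    have d: "A \<noteq> B" "A \<noteq> R" "B \<noteq> R" unfolding A_def B_def R_def by auto
    have cN: "card (nbrs ?E x) = 3" using N d by simp
    have sN: "(\<Sum>y\<in>nbrs ?E x. ff m y) = ff m A + ff m B + ff m R" using N d by simp
    have fA: "ff m A = ?C * (?Q - (if i = 1 then qq m else qq m ^ (i - 1)))"
      unfolding A_def using i by (cases "i = 1") (auto simp: ff_def)
    have fB: "ff m B = ?C * (?Q - qq m ^ (i + 1))"
      unfolding B_def using i by (cases "i = m") (auto simp: ff_def)
    have fR: "ff m R = ?C * (?Q - Gf m i (2*m+1))"
      unfolding R_def using i by (auto simp: ff_def)
    have fx: "ff m x = ?C * (?Q - qq m ^ i)" using Vv i by (simp add: ff_def)
    have S: "(\<Sum>y\<in>nbrs ?E x. trans_prob ?E ?X nxt x y * ff m y) = (ff m A + ff m B + ff m R) / 3"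
      using sum_unexc[of x ?X ?E nxt "ff m"] Vv nexc_Vv sN cN by simp
    have "ff m x \<le> 1 + (ff m A + ff m B + ff m R) / 3"
      unfolding fx fA fB fR by (rule avg3[OF vv_ineq[OF m1 i]])
    then show ?thesis unfolding S .
  next
    case (Vr i j)
    have ij: "1 \<le> i" "i \<le> m" "1 \<le> j" "j \<le> 2*m+1" using True Vr by auto
    define L where "L = (if j = 1 then Vs i else Vr i (j - 1))"
    define R where "R = (if j = 2*m+1 then Vv i else Vr i (j + 1))"
    have N: "nbrs ?E x = {L, R}" using nb_Vr[OF ij] Vr unfolding L_def R_def by simp
    have d: "L \<noteq> R" unfolding L_def R_def by auto
    have cN: "card (nbrs ?E x) = 2" using N d by simp
    have sN: "(\<Sum>y\<in>nbrs ?E x. ff m y) = ff m L + ff m R" using N d by simp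
    have fL: "ff m L = ?C * (?Q - Gf m i (j - 1))"
      unfolding L_def using ij by (cases "j = 1") (auto simp: ff_def Gf0)
    have fR: "ff m R = ?C * (?Q - Gf m i (j + 1))"
    proof (cases "j = 2*m+1")
      case True
      then have "Gf m i (j+1) = qq m ^ i" using Gf_end[of m i] by simp
      then show ?thesis unfolding R_def using ij True by (simp add: ff_def)
    next
      case False
      then show ?thesis unfolding R_def using ij by (simp add: ff_def)
    qed
    have fx: "ff m x = ?C * (?Q - Gf m i j)" using Vr ij by (simp add: ff_def)
    have S: "(\<Sum>y\<in>nbrs ?E x. trans_prob ?E ?X nxt x y * ff m y) = (ff m L + ff m R) / 2"
      using sum_unexc[of x ?X ?E nxt "ff m"] Vr nexc_Vr sN cN by simp
    have "ff m x \<le> 1 + (ff m L + ff m R) / 2"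
      unfolding fx fL fR by (rule avg2[OF Gf_mid[OF ij(3)]])
    then show ?thesis unfolding S .
  qed
qed

theorem mainTheorem4:
  fixes m :: nat and nxt :: "hv \<Rightarrow> hv"
  assumes "m \<ge> 1"
    and "\<forall>x\<in>H_exc m. nxt x \<in> nbrs (H_edges m) x \<and>
           gdist (H_edges m) (nxt x) Vb + 1 = gdist (H_edges m) x Vb"
  shows "hit_time (H_edges m) (H_exc m) nxt Vb (Vv 1)
           \<ge> ennreal (exp (sqrt (real m) / 10) / (real m powr (3/2) + 1))"
proof -
  have m1: "1 \<le> m" using assms(1) by simp
  have nA: "nxt Va = Vv 1"
    using assms(2) exc_Va[of m] by (intro nxt_Va[OF m1]) auto
  have nS: "nxt (Vs i) = (if i = 1 then Va else Vs (i - 1))" if i: "1 \<le> i" "i \<le> m" for i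
    using assms(2) exc_Vs[OF i] by (intro nxt_Vs[OF m1 i]) auto
  have fM: "ff m x \<le> CC m * qq m ^ (m+1)" for x
  proof (cases "valid m x")
    case True
    then have "gg m x \<ge> 0" by (rule gg_nonneg)
    then show ?thesis using True CC_pos[of m] by (simp add: ff_def algebra_simps)
  next
    case False
    then show ?thesis using CC_pos[of m] qq_pos[of m] by (simp add: ff_def)
  qed
  have fb: "ff m Vb \<le> 0" by (simp add: ff_def)
  have "ennreal (ff m (Vv 1)) \<le> hit_time (H_edges m) (H_exc m) nxt Vb (Vv 1)"
    by (rule potential_bound[OF fM fb cond[OF m1 nA nS]]) auto
  moreover have "ff m (Vv 1) = CC m * (qq m ^ (m+1) - qq m)" using m1 by (simp add: ff_def)
  moreover have "exp (sqrt (real m) / 10) / (real m powr (3/2) + 1) \<le> CC m * (qq m ^ (m+1) - qq m)"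
    using final_bound[OF m1] unfolding CC_def .
  ultimately show ?thesis
    by (metis ennreal_leI order_trans)
qed

end
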